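(* Let $X=\{x_0,\ldots,x_m\}$, $\tilde X=\{\tilde x_1,\ldots,\tilde x_q\}$ (commuting), $c\in\mathbb{R}^q\langle\langle X\rangle\rangle$ proper and $d\in\mathbb{R}^m[[\tilde X]]$ purely improper. Consider the closed-loop system in which the Chen-Fliess series $F_c$ is in multiplicative static output feedback with the formal static map $f_d$: $y=F_c[u]$, $u=v\cdot f_d(y)$ (componentwise product), with external input $v$. Then the closed-loop system is (formally) a Chen-Fliess series $y=F_e[v]$ with generating series given by the multiplicative static feedback product $e=c\,\bar{@}\,d:=c\,\tilde\circ\,\delta_{(d^{-1}\circ c)^{\circ-1}}$, where $d^{-1}\circ c$ is the Wiener-Fliess composition product.
   Context: Chen-Fliess series: $F_c[u](t)=\sum_{\eta\in X^\ast}(c,\eta)E_\eta[u](t,t_0)$, $E_\emptyset=1$, $E_{x_i\bar\eta}[u](t,t_0)=\int_{t_0}^tu_i(\tau)E_{\bar\eta}[u](\tau,t_0)d\tau$, $u_0=1$ (formal). Formal static map: $f_d(z)=\sum_{\eta\in\tilde X^\ast}(d,\eta)z^\eta$, $z\in\mathbb{R}^q$, $z^\emptyset=1$, $z^{\tilde x_i\eta}=z_iz^\eta$. Series conventions: coefficients in $\mathbb{R}^\ell$, componentwise products, proper = zero constant term, purely improper = each component has nonzero constant term; $d^{-1}$ the componentwise Cauchy inverse in $\mathbb{R}^m[[\tilde X]]$. Shuffle product $\sqcup\!\sqcup$: bilinear, $(x_i\eta)\sqcup\!\sqcup(x_j\xi)=x_i(\eta\sqcup\!\sqcup x_j\xi)+x_j(x_i\eta\sqcup\!\sqcup\xi)$,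 $\eta\sqcup\!\sqcup\emptyset=\emptyset\sqcup\!\sqcup\eta=\eta$; $g^{\sqcup\!\sqcup-1}$ componentwise shuffle inverse. Wiener-Fliess composition for proper $c$: $d\circ c=\sum_{\tilde\eta}(d,\tilde\eta)c^{\sqcup\!\sqcup\tilde\eta}$, $c^{\sqcup\!\sqcup\emptyset}=1$, $c^{\sqcup\!\sqcup\tilde x_i\tilde\eta}=c_i\sqcup\!\sqcup c^{\sqcup\!\sqcup\tilde\eta}$; it generates $f_d\circ F_c$. Multiplicative mixed composition: $c\,\tilde\circ\,\delta_g=\sum_\eta(c,\eta)\bar\phi_g(\eta)(\mathbf 1)$, $\mathbf 1=1\emptyset$, $\bar\phi_g(x_0)(w)=x_0w$, $\bar\phi_g(x_i)(w)=x_i(g_i\sqcup\!\sqcup w)$ ($i\ge1$), multiplicative; it generates $v\mapsto F_c[v\cdot F_g[v]]$. For purely improper $g\in\mathbb{R}^m\langle\langle X\rangle\rangle$, $g^{\circ-1}$ is the unique $h$ with $h=g^{\sqcup\!\sqcup-1}\,\tilde\circ\,\delta_h$. *)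

theory Defs
  imports Complex_Main "HOL-Library.Poly_Mapping"
begin

text \<open>A word over X is a list of letter indices (letter i stands for x_i, x_0 the drift
letter). A scalar series is a coefficient function on words; an R^l-valued series is
a family of scalar series indexed by the component number 1..l.\<close>

type_synonym word = "nat list"
type_synonym ser = "word \<Rightarrow> real"
type_synonym vser = "nat \<Rightarrow> ser"

definition one_ser :: ser where
  "one_ser w = (if w = [] then 1 else 0)"

definition shuffle :: "ser \<Rightarrow> ser \<Rightarrow> ser" where
  "shuffle a b w = (\<Sum>S\<in>Pow {0..<length w}. a (nths w S) * b (nths w (- S)))"

definition shuffle_inv :: "vser \<Rightarrow> vser" where
  "shuffle_inv g i = (THE b. shuffle (g i) b = one_ser)"

fun shuffle_pow :: "ser \<Rightarrow> nat \<Rightarrow> ser" where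
  "shuffle_pow a 0 = one_ser"
| "shuffle_pow a (Suc n) = shuffle a (shuffle_pow a n)"

type_synonym mono = "nat \<Rightarrow>\<^sub>0 nat"
type_synonym cser = "mono \<Rightarrow> real"
type_synonym vcser = "nat \<Rightarrow> cser"

definition mono_deg :: "mono \<Rightarrow> nat" where
  "mono_deg \<alpha> = (\<Sum>i\<in>Poly_Mapping.keys \<alpha>. Poly_Mapping.lookup \<alpha> i)"

definition cone :: cser where
  "cone \<alpha> = (if \<alpha> = 0 then 1 else 0)"

definition cmul :: "cser \<Rightarrow> cser \<Rightarrow> cser" where
  "cmul a b \<alpha> = (\<Sum>(\<beta>,\<gamma>)\<in>{(\<beta>,\<gamma>). \<beta> + \<gamma> = \<alpha>}. a \<beta> * b \<gamma>)"

definition cauchy_inv :: "vcser \<Rightarrow> vcser" where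
  "cauchy_inv d i = (THE b. cmul (d i) b = cone)"

definition shuffle_mono :: "vser \<Rightarrow> mono \<Rightarrow> ser" where
  "shuffle_mono c \<alpha> =
     foldr (\<lambda>i acc. shuffle (shuffle_pow (c i) (Poly_Mapping.lookup \<alpha> i)) acc)
           (sorted_list_of_set (Poly_Mapping.keys \<alpha>)) one_ser"

text \<open>For proper c, c^{shuffle alpha} only has words of length at least deg alpha, so the
coefficient of w is the displayed finite sum.\<close>
definition wf_comp :: "nat \<Rightarrow> vcser \<Rightarrow> vser \<Rightarrow> vser" where
  "wf_comp q d c i w =
     (\<Sum>\<alpha>\<in>{\<alpha>. Poly_Mapping.keys \<alpha> \<subseteq> {1..q} \<and> mono_deg \<alpha> \<le> length w}. d i \<alpha> * shuffle_mono c \<alpha> w)"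

definition letter_op :: "vser \<Rightarrow> nat \<Rightarrow> ser \<Rightarrow> ser" where
  "letter_op g a s w =
     (case w of [] \<Rightarrow> 0
      | b # w' \<Rightarrow> (if b = a then (if a = 0 then s w' else shuffle (g a) s w') else 0))"

fun phi :: "vser \<Rightarrow> word \<Rightarrow> ser \<Rightarrow> ser" where
  "phi g [] s = s"
| "phi g (a # \<eta>) s = letter_op g a (phi g \<eta> s)"

text \<open>c mixed-composed with delta_g. The word phi_g(eta)(1) only contains words in
which every letter of eta occurs, and of length at least |eta|, so the coefficient of
w is the displayed finite sum.\<close>
definition mixed_comp :: "vser \<Rightarrow> vser \<Rightarrow> vser" where
  "mixed_comp c g i w =
     (\<Sum>\<eta>\<in>{\<eta>. set \<eta> \<subseteq> set w \<and> length \<eta> \<le> length w}. c i \<eta> * phi g \<eta> one_ser w)"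

definition comp_inv :: "vser \<Rightarrow> vser" where
  "comp_inv g = (THE h. h = mixed_comp (shuffle_inv g) h)"

definition mult_static_fb :: "nat \<Rightarrow> vser \<Rightarrow> vcser \<Rightarrow> vser" where
  "mult_static_fb q c d = mixed_comp c (comp_inv (wf_comp q (cauchy_inv d) c))"

end

theory Submission
  imports Defs "HOL-Library.Function_Algebras"
begin


definition sh :: "nat \<Rightarrow> ser \<Rightarrow> ser" where "sh x a = (\<lambda>v. a (x # v))"

lemma shuffle_Nil[simp]: "shuffle a b [] = a [] * b []"
  by (simp add: shuffle_def)

lemma Pow_Suc_split:
  "Pow {0..<Suc n} = (\<lambda>T. Suc ` T) ` Pow {0..<n} \<union> (\<lambda>T. insert 0 (Suc ` T)) ` Pow {0..<n}"
proof (rule set_eqI, rule iffI)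
  fix S assume S: "S \<in> Pow {0..<Suc n}"
  let ?T = "{j. Suc j \<in> S}"
  have T: "?T \<in> Pow {0..<n}" using S by auto
  show "S \<in> (\<lambda>T. Suc ` T) ` Pow {0..<n} \<union> (\<lambda>T. insert 0 (Suc ` T)) ` Pow {0..<n}"
  proof (cases "0 \<in> S")
    case True
    have "S = insert 0 (Suc ` ?T)" using True
      by (auto simp: image_iff) (metis not0_implies_Suc)
    then show ?thesis using T by blast
  next
    case False
    have "S = Suc ` ?T" using False
      by (auto simp: image_iff) (metis not0_implies_Suc)
    then show ?thesis using T by blast
  qed
qed auto

lemma shuffle_Cons:
  "shuffle a b (x # w) = shuffle (sh x a) b w + shuffle a (sh x b) w"
proof -
  let ?f = "\<lambda>S. a (nths (x # w) S) * b (nths (x # w) (- S))"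
  have d: "(\<lambda>T. Suc ` T) ` Pow {0..<length w} \<inter> (\<lambda>T. insert 0 (Suc ` T)) ` Pow {0..<length w} = {}"
    by auto
  have i1: "inj_on (\<lambda>T. Suc ` T) (Pow {0..<length w})"
    by (rule inj_onI) (simp add: inj_image_eq_iff)
  have i2: "inj_on (\<lambda>T. insert 0 (Suc ` T)) (Pow {0..<length w})"
  proof (rule inj_onI)
    fix X Y :: "nat set" assume "insert 0 (Suc ` X) = insert 0 (Suc ` Y)"
    then have "Suc ` X = Suc ` Y" by (metis Diff_insert_absorb imageE nat.distinct(1))
    then show "X = Y" by (simp add: inj_image_eq_iff)
  qed
  have e1: "{j. Suc j \<in> Suc ` T} = T" for T by auto
  have e2: "{j. Suc j \<in> - Suc ` T} = - T" "{j. Suc j \<notin> Suc ` T} = - T" for T by auto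
  have e3: "{j. Suc j \<in> insert 0 (Suc ` T)} = T" for T by auto
  have e4: "{j. Suc j \<in> - insert 0 (Suc ` T)} = - T" "{j. Suc j \<notin> insert 0 (Suc ` T)} = - T" for T by auto
  have "shuffle a b (x # w) = sum ?f (Pow {0..<Suc (length w)})"
    by (simp add: shuffle_def)
  also have "\<dots> = sum ?f ((\<lambda>T. Suc ` T) ` Pow {0..<length w}) + sum ?f ((\<lambda>T. insert 0 (Suc ` T)) ` Pow {0..<length w})"
    by (subst Pow_Suc_split, rule sum.union_disjoint) (use d in auto)
  also have "sum ?f ((\<lambda>T. Suc ` T) ` Pow {0..<length w}) = shuffle a (sh x b) w"
    by (subst sum.reindex[OF i1]) (simp add: shuffle_def sh_def nths_Cons e1 e2)
  also have "sum ?f ((\<lambda>T. insert 0 (Suc ` T)) ` Pow {0..<length w}) = shuffle (sh x a) b w"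
    by (subst sum.reindex[OF i2]) (simp add: shuffle_def sh_def nths_Cons e1 e2 e3 e4)
  finally show ?thesis by simp
qed

lemma sh_shuffle: "sh x (shuffle a b) = shuffle (sh x a) b + shuffle a (sh x b)"
  by (rule ext) (simp add: sh_def shuffle_Cons)

lemma ser_eqI: "(\<And>w. f w = g w) \<Longrightarrow> f = (g::ser)" by (rule ext)

lemma shuffle_zero1[simp]: "shuffle 0 b = 0"
  by (rule ext) (simp add: shuffle_def)
lemma shuffle_zero2[simp]: "shuffle a 0 = 0"
  by (rule ext) (simp add: shuffle_def)
lemma shuffle_add1: "shuffle (a + b) c = shuffle a c + shuffle b c"
  by (rule ext) (simp add: shuffle_def algebra_simps sum.distrib)
lemma shuffle_add2: "shuffle a (b + c) = shuffle a b + shuffle a c"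
  by (rule ext) (simp add: shuffle_def algebra_simps sum.distrib)

lemma shuffle_sum2: "shuffle a (\<lambda>v. \<Sum>j\<in>F. r j * f j v) w = (\<Sum>j\<in>F. r j * shuffle a (f j) w)"
  by (simp add: shuffle_def sum_distrib_left sum_distrib_right sum.swap[of _ F] algebra_simps)

lemma shuffle_comm: "shuffle a b = shuffle b a"
proof (rule ext)
  fix w show "shuffle a b w = shuffle b a w"
    by (induction w arbitrary: a b) (simp_all add: shuffle_Cons)
qed

lemma shuffle_assoc: "shuffle (shuffle a b) c = shuffle a (shuffle b c)"
proof (rule ext)
  fix w show "shuffle (shuffle a b) c w = shuffle a (shuffle b c) w"
    by (induction w arbitrary: a b c) (simp_all add: shuffle_Cons sh_shuffle shuffle_add1 shuffle_add2)
qed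

lemma sh_one[simp]: "sh x one_ser = 0"
  by (rule ext) (simp add: sh_def one_ser_def)

lemma shuffle_one1[simp]: "shuffle one_ser a = a"
proof (rule ext)
  fix w show "shuffle one_ser a w = a w"
  proof (induction w arbitrary: a)
    case Nil then show ?case by (simp add: one_ser_def)
  next
    case (Cons x w)
    have "shuffle one_ser a (x # w) = shuffle one_ser (sh x a) w"
      by (simp add: shuffle_Cons)
    also have "\<dots> = a (x # w)" using Cons by (simp add: sh_def)
    finally show ?case .
  qed
qed

lemma shuffle_one2[simp]: "shuffle a one_ser = a"
  by (subst shuffle_comm) simp



lemma shuffle_cong:
  "(\<And>S. a (nths w S) = a' (nths w S)) \<Longrightarrow> (\<And>S. b (nths w S) = b' (nths w S))
   \<Longrightarrow> shuffle a b w = shuffle a' b' w"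
  by (simp add: shuffle_def)

lemma length_nths_le: "length (nths w S) \<le> length w"
proof -
  have "card {i. i < length w \<and> i \<in> S} \<le> card {..<length w}"
    by (rule card_mono) auto
  then show ?thesis by (simp add: length_nths)
qed

lemma length_nths_compl: "length (nths w S) + length (nths w (- S)) = length w"
proof -
  have "card {i. i < length w \<and> i \<in> S} + card {i. i < length w \<and> i \<in> - S}
      = card ({i. i < length w \<and> i \<in> S} \<union> {i. i < length w \<and> i \<in> - S})"
    by (rule card_Un_disjoint[symmetric]) auto
  also have "{i. i < length w \<and> i \<in> S} \<union> {i. i < length w \<and> i \<in> - S} = {..<length w}" by auto
  finally show ?thesis by (simp add: length_nths)
qed

lemma length_nths_compl_less:
  assumes "S \<subseteq> {0..<length w}" "S \<noteq> {}"
  shows "length (nths w (- S)) < length w"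
proof -
  obtain i where i: "i \<in> S" using assms by auto
  have sub: "{j. j < length w \<and> j \<in> -S} \<subseteq> {..<length w}" by auto
  have ne: "i \<in> {..<length w} - {j. j < length w \<and> j \<in> -S}" using i assms(1) by auto
  have "card {i. i < length w \<and> i \<in> -S} < card {..<length w}"
    by (rule psubset_card_mono[OF finite_lessThan]) (use sub ne in blast)
  then show ?thesis by (simp add: length_nths)
qed

definition ordge :: "ser \<Rightarrow> nat \<Rightarrow> bool" where
  "ordge a k = (\<forall>v. length v < k \<longrightarrow> a v = 0)"

lemma ordge_shuffle: "ordge a k \<Longrightarrow> ordge b l \<Longrightarrow> ordge (shuffle a b) (k + l)"
  unfolding ordge_def shuffle_def
proof (intro allI impI)
  fix v :: word
  assume a: "\<forall>v. length v < k \<longrightarrow> a v = 0" and b: "\<forall>v. length v < l \<longrightarrow> b v = 0"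
    and v: "length v < k + l"
  show "(\<Sum>S\<in>Pow {0..<length v}. a (nths v S) * b (nths v (- S))) = 0"
  proof (rule sum.neutral, rule ballI)
    fix S
    have "length (nths v S) < k \<or> length (nths v (-S)) < l"
      using length_nths_compl[of v S] v by linarith
    then show "a (nths v S) * b (nths v (- S)) = 0" using a b by auto
  qed
qed

lemma ordge_0[simp]: "ordge a 0" by (simp add: ordge_def)

lemma ordge_pow: "a [] = 0 \<Longrightarrow> ordge (shuffle_pow a n) n"
proof (induction n)
  case (Suc n)
  have "ordge a 1" using Suc.prems by (simp add: ordge_def)
  from ordge_shuffle[OF this Suc.IH[OF Suc.prems]] show ?case by simp
qed simp

lemma fixpoint_unique_exists:
  fixes T :: "('k \<Rightarrow> 'v) \<Rightarrow> 'k \<Rightarrow> 'v" and \<mu> :: "'k \<Rightarrow> nat"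
  assumes loc: "\<And>f g x. (\<And>y. \<mu> y < \<mu> x \<Longrightarrow> f y = g y) \<Longrightarrow> T f x = T g x"
  shows "\<exists>!f. T f = f"
proof -
  define H where "H n = (T ^^ n) (\<lambda>_. undefined)" for n
  have HS: "H (Suc n) = T (H n)" for n by (simp add: H_def)
  have stab: "\<forall>x. \<mu> x < n \<longrightarrow> H n x = H (Suc n) x" for n
  proof (induction n)
    case (Suc n)
    show ?case
    proof (intro allI impI)
      fix x assume "\<mu> x < Suc n"
      have "H (Suc n) x = T (H n) x" by (simp add: HS)
      also have "\<dots> = T (H (Suc n)) x"
      proof (rule loc)
        fix y assume "\<mu> y < \<mu> x"
        then have "\<mu> y < n" using \<open>\<mu> x < Suc n\<close> by simp
        then show "H n y = H (Suc n) y" using Suc.IH by blast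
      qed
      also have "\<dots> = H (Suc (Suc n)) x" by (simp add: HS)
      finally show "H (Suc n) x = H (Suc (Suc n)) x" .
    qed
  qed simp
  have stab2: "H k x = H (Suc (\<mu> x)) x" if "k \<ge> Suc (\<mu> x)" for k x
    using that
  proof (induction k)
    case (Suc k)
    show ?case
    proof (cases "Suc (\<mu> x) \<le> k")
      case True
      have "\<mu> x < k" using True by simp
      then have "H k x = H (Suc k) x" using stab[of k] by blast
      then show ?thesis using Suc.IH[OF True] by simp
    next
      case False
      then have "Suc k = Suc (\<mu> x)" using Suc.prems by simp
      then show ?thesis by simp
    qed
  qed simp
  define f where "f x = H (Suc (\<mu> x)) x" for x
  have fixp: "T f = f"
  proof
    fix x
    have "T f x = T (H (Suc (\<mu> x))) x"
    proof (rule loc)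
      fix y assume "\<mu> y < \<mu> x"
      then show "f y = H (Suc (\<mu> x)) y" unfolding f_def using stab2[of y "Suc (\<mu> x)"] by simp
    qed
    also have "\<dots> = H (Suc (Suc (\<mu> x))) x" by (simp add: HS)
    also have "\<dots> = f x" unfolding f_def using stab2[of x "Suc (Suc (\<mu> x))"] by simp
    finally show "T f x = f x" .
  qed
  have uniq: "g = f" if "T g = g" for g
  proof
    fix x show "g x = f x"
    proof (induction x rule: measure_induct_rule[of \<mu>])
      case (less x)
      have "g x = T g x" using that by simp
      also have "\<dots> = T f x" by (rule loc) (rule less)
      also have "\<dots> = f x" using fixp by simp
      finally show ?case .
    qed
  qed
  show ?thesis by (rule ex1I[of _ f]) (rule fixp, rule uniq)
qed

lemma aux_div: "(x::real) = (y - r) / a \<Longrightarrow> a \<noteq> 0 \<Longrightarrow> a * x + r = y"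
  by (simp add: field_simps)

lemma shuffle_inv_ex1:
  assumes a0: "a [] \<noteq> 0"
  shows "\<exists>!b. shuffle a b = one_ser"
proof -
  define R where "R b w = (\<Sum>S\<in>Pow {0..<length w} - {{}}. a (nths w S) * b (nths w (- S)))" for b w
  define T where "T b w = (one_ser w - R b w) / a []" for b w
  have split: "shuffle a b w = a [] * b w + R b w" for b w
  proof -
    have "shuffle a b w = (\<Sum>S\<in>insert {} (Pow {0..<length w} - {{}}). a (nths w S) * b (nths w (- S)))"
      unfolding shuffle_def by (rule sum.cong) auto
    also have "\<dots> = a [] * b w + R b w"
      by (subst sum.insert) (auto simp: R_def nths_all)
    finally show ?thesis .
  qed
  have eq: "shuffle a b = one_ser \<longleftrightarrow> T b = b" for b
  proof
    assume h: "shuffle a b = one_ser"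
    show "T b = b"
    proof
      fix w
      have "one_ser w = a [] * b w + R b w" using split[of b w] h by simp
      then show "T b w = b w" using a0 by (simp add: T_def)
    qed
  next
    assume h: "T b = b"
    show "shuffle a b = one_ser"
    proof
      fix w
      have "b w = (one_ser w - R b w) / a []" using fun_cong[OF h, of w] by (simp only: T_def)
      from aux_div[OF this a0] show "shuffle a b w = one_ser w" by (simp only: split)
    qed
  qed
  have "\<exists>!b. T b = b"
  proof (rule fixpoint_unique_exists[where \<mu> = length])
    fix f g :: ser and x :: word
    assume h: "\<And>y. length y < length x \<Longrightarrow> f y = g y"
    have "R f x = R g x" unfolding R_def
      by (rule sum.cong) (auto intro!: h length_nths_compl_less)
    then show "T f x = T g x" by (simp add: T_def)
  qed
  then show ?thesis using eq by simp
qed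

lemma shuffle_inv_prop:
  "g i [] \<noteq> 0 \<Longrightarrow> shuffle (g i) (shuffle_inv g i) = one_ser"
  using theI'[OF shuffle_inv_ex1[of "g i"]] unfolding shuffle_inv_def by blast



definition Ew :: "word \<Rightarrow> word set" where
  "Ew w = {\<eta>. set \<eta> \<subseteq> set w \<and> length \<eta> \<le> length w}"

lemma finite_Ew: "finite (Ew w)"
  unfolding Ew_def by (rule finite_lists_length_le) simp

definition msc :: "vser \<Rightarrow> ser \<Rightarrow> ser" where
  "msc h s w = (\<Sum>\<eta>\<in>Ew w. s \<eta> * phi h \<eta> one_ser w)"

lemma mixed_comp_msc: "mixed_comp c g i = msc g (c i)"
  by (rule ext) (simp add: mixed_comp_def msc_def Ew_def)

lemma shuffle_nonzero: "shuffle a b w \<noteq> 0 \<Longrightarrow> \<exists>S. a (nths w S) \<noteq> 0 \<and> b (nths w (- S)) \<noteq> 0"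
  unfolding shuffle_def by (metis (no_types, lifting) mult_eq_0_iff sum.neutral)

lemma phi_support: "phi h \<eta> one_ser w \<noteq> 0 \<Longrightarrow> \<eta> \<in> Ew w"
proof (induction \<eta> arbitrary: w)
  case Nil
  then show ?case by (simp add: Ew_def)
next
  case (Cons a \<eta>)
  obtain b w' where w: "w = b # w'"
    using Cons.prems by (cases w) (auto simp: letter_op_def)
  have ba: "b = a" using Cons.prems w by (auto simp: letter_op_def split: if_splits)
  show ?case
  proof (cases "a = 0")
    case True
    then have "phi h \<eta> one_ser w' \<noteq> 0" using Cons.prems w ba by (simp add: letter_op_def)
    then show ?thesis using Cons.IH w ba by (auto simp: Ew_def)
  next
    case False
    then have "shuffle (h a) (phi h \<eta> one_ser) w' \<noteq> 0" using Cons.prems w ba by (simp add: letter_op_def)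
    then obtain S where "phi h \<eta> one_ser (nths w' (- S)) \<noteq> 0" using shuffle_nonzero by blast
    from Cons.IH[OF this] have "set \<eta> \<subseteq> set w'" "length \<eta> \<le> length w'"
      using set_nths_subset[of w' "-S"] length_nths_le[of w' "-S"] by (auto simp: Ew_def)
    then show ?thesis using w ba by (auto simp: Ew_def)
  qed
qed

lemma msc_any:
  assumes "finite F" "\<And>\<eta>. phi h \<eta> one_ser w \<noteq> 0 \<Longrightarrow> \<eta> \<in> F"
  shows "msc h s w = (\<Sum>\<eta>\<in>F. s \<eta> * phi h \<eta> one_ser w)"
proof -
  have "msc h s w = (\<Sum>\<eta>\<in>Ew w \<inter> F. s \<eta> * phi h \<eta> one_ser w)"
    unfolding msc_def
    by (rule sum.mono_neutral_right) (use finite_Ew assms(2) in auto)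
  also have "\<dots> = (\<Sum>\<eta>\<in>F. s \<eta> * phi h \<eta> one_ser w)"
    by (rule sum.mono_neutral_left) (use assms phi_support in auto)
  finally show ?thesis .
qed

lemma msc_Nil[simp]: "msc h s [] = s []"
proof -
  have "Ew [] = {[]}" by (auto simp: Ew_def)
  then show ?thesis by (simp add: msc_def one_ser_def)
qed

lemma msc_Cons_sum:
  "msc h s (b # w) = (\<Sum>\<eta>\<in>{\<eta>. set \<eta> \<subseteq> set (b # w) \<and> length \<eta> \<le> length w}.
      s (b # \<eta>) * phi h (b # \<eta>) one_ser (b # w))"
  (is "_ = sum _ ?E")
proof -
  have fin: "finite ?E" by (rule finite_lists_length_le) simp
  have "msc h s (b # w) = (\<Sum>\<eta>\<in>Cons b ` ?E. s \<eta> * phi h \<eta> one_ser (b # w))"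
  proof (rule msc_any)
    show "finite (Cons b ` ?E)" using fin by simp
    fix \<eta> assume nz: "phi h \<eta> one_ser (b # w) \<noteq> 0"
    then have E: "\<eta> \<in> Ew (b # w)" by (rule phi_support)
    obtain a \<eta>' where e: "\<eta> = a # \<eta>'" using nz by (cases \<eta>) (auto simp: one_ser_def)
    have "a = b" using nz e by (auto simp: letter_op_def split: if_splits)
    then show "\<eta> \<in> Cons b ` ?E" using E e by (auto simp: Ew_def)
  qed
  also have "\<dots> = sum (\<lambda>\<eta>. s (b # \<eta>) * phi h (b # \<eta>) one_ser (b # w)) ?E"
    by (subst sum.reindex) auto
  finally show ?thesis .
qed

lemma msc_Cons0: "msc h s (0 # w) = msc h (sh 0 s) w"
proof -
  let ?E = "{\<eta>. set \<eta> \<subseteq> set (0 # w) \<and> length \<eta> \<le> length w}"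
  have "msc h s (0 # w) = (\<Sum>\<eta>\<in>?E. sh 0 s \<eta> * phi h \<eta> one_ser w)"
    by (simp add: msc_Cons_sum letter_op_def sh_def)
  also have "\<dots> = msc h (sh 0 s) w"
    by (rule msc_any[symmetric]) (auto intro: finite_lists_length_le dest!: phi_support simp: Ew_def)
  finally show ?thesis .
qed

lemma msc_Cons: "b \<noteq> 0 \<Longrightarrow> msc h s (b # w) = shuffle (h b) (msc h (sh b s)) w"
proof -
  assume b: "b \<noteq> 0"
  let ?E = "{\<eta>. set \<eta> \<subseteq> set (b # w) \<and> length \<eta> \<le> length w}"
  have fin: "finite ?E" by (rule finite_lists_length_le) simp
  have "msc h s (b # w) = (\<Sum>\<eta>\<in>?E. sh b s \<eta> * shuffle (h b) (phi h \<eta> one_ser) w)"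
    using b by (simp add: msc_Cons_sum letter_op_def sh_def)
  also have "\<dots> = shuffle (h b) (\<lambda>v. \<Sum>\<eta>\<in>?E. sh b s \<eta> * phi h \<eta> one_ser v) w"
    by (rule shuffle_sum2[symmetric])
  also have "\<dots> = shuffle (h b) (msc h (sh b s)) w"
  proof (rule shuffle_cong)
    fix S
    show "(\<Sum>\<eta>\<in>?E. sh b s \<eta> * phi h \<eta> one_ser (nths w S)) = msc h (sh b s) (nths w S)"
    proof (rule msc_any[symmetric])
      show "finite ?E" by (rule fin)
      fix \<eta> assume "phi h \<eta> one_ser (nths w S) \<noteq> 0"
      then have "\<eta> \<in> Ew (nths w S)" by (rule phi_support)
      then show "\<eta> \<in> ?E" using set_nths_subset[of w S] length_nths_le[of w S] by (auto simp: Ew_def)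
    qed
  qed simp
  finally show ?thesis .
qed

lemma sh_msc0: "sh 0 (msc h s) = msc h (sh 0 s)"
  by (rule ext) (simp add: sh_def msc_Cons0)

lemma sh_msc: "b \<noteq> 0 \<Longrightarrow> sh b (msc h s) = shuffle (h b) (msc h (sh b s))"
  by (rule ext) (simp add: sh_def msc_Cons)

lemma msc_add: "msc h (a + b) = msc h a + msc h b"
  by (rule ext) (simp add: msc_def algebra_simps sum.distrib)

lemma msc_zero[simp]: "msc h 0 = 0"
  by (rule ext) (simp add: msc_def)

lemma sh_add: "sh x (a + b) = sh x a + sh x b"
  by (rule ext) (simp add: sh_def)

lemma msc_one[simp]: "msc h one_ser = one_ser"
proof (rule ext)
  fix w show "msc h one_ser w = one_ser w"
  proof (cases w)
    case Nil then show ?thesis by simp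
  next
    case (Cons b w')
    then show ?thesis
      by (cases "b = 0") (simp_all add: msc_Cons0 msc_Cons one_ser_def)
  qed
qed

lemma msc_shuffle: "msc h (shuffle a b) = shuffle (msc h a) (msc h b)"
proof (rule ext)
  fix w
  show "msc h (shuffle a b) w = shuffle (msc h a) (msc h b) w"
  proof (induction "length w" arbitrary: w a b rule: less_induct)
    case less
    show ?case
    proof (cases w)
      case Nil then show ?thesis by simp
    next
      case (Cons x w')
      have IH: "msc h (shuffle a' b') v = shuffle (msc h a') (msc h b') v"
        if "length v \<le> length w'" for a' b' v
        using less that Cons by simp
      show ?thesis
      proof (cases "x = 0")
        case True
        have "msc h (shuffle a b) w = msc h (shuffle (sh 0 a) b) w' + msc h (shuffle a (sh 0 b)) w'"
          using True Cons by (simp add: msc_Cons0 sh_shuffle msc_add)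
        also have "\<dots> = shuffle (msc h (sh 0 a)) (msc h b) w' + shuffle (msc h a) (msc h (sh 0 b)) w'"
          using IH by simp
        also have "\<dots> = shuffle (msc h a) (msc h b) w"
          using True Cons by (simp add: shuffle_Cons sh_msc0)
        finally show ?thesis .
      next
        case False
        have "msc h (shuffle a b) w = shuffle (h x) (msc h (shuffle (sh x a) b) + msc h (shuffle a (sh x b))) w'"
          using False Cons by (simp add: msc_Cons sh_shuffle msc_add)
        also have "\<dots> = shuffle (h x) (shuffle (msc h (sh x a)) (msc h b) + shuffle (msc h a) (msc h (sh x b))) w'"
          by (rule shuffle_cong) (simp_all add: IH length_nths_le)
        also have "\<dots> = shuffle (shuffle (h x) (msc h (sh x a))) (msc h b) w'
                        + shuffle (msc h a) (shuffle (h x) (msc h (sh x b))) w'"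
          by (simp add: shuffle_add2 shuffle_assoc)
             (metis shuffle_assoc shuffle_comm)
        also have "\<dots> = shuffle (msc h a) (msc h b) w"
          using False Cons by (simp add: shuffle_Cons sh_msc)
        finally show ?thesis .
      qed
    qed
  qed
qed

lemma msc_pow: "msc h (shuffle_pow a n) = shuffle_pow (msc h a) n"
  by (induction n) (simp_all add: msc_shuffle)



interpretation shfl: comm_monoid_list_set shuffle one_ser
  by unfold_locales (metis shuffle_assoc shuffle_comm shuffle_one1)+

lemma shuffle_mono_F: "shuffle_mono c \<alpha> = shfl.set.F (\<lambda>i. shuffle_pow (c i) (Poly_Mapping.lookup \<alpha> i)) (Poly_Mapping.keys \<alpha>)"
proof -
  have "shuffle_mono c \<alpha> = shfl.list.F (map (\<lambda>i. shuffle_pow (c i) (Poly_Mapping.lookup \<alpha> i)) (sorted_list_of_set (Poly_Mapping.keys \<alpha>)))"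
    unfolding shuffle_mono_def shfl.list.eq_foldr by (simp add: foldr_map o_def)
  also have "\<dots> = shfl.set.F (\<lambda>i. shuffle_pow (c i) (Poly_Mapping.lookup \<alpha> i)) (Poly_Mapping.keys \<alpha>)"
    by (subst shfl.distinct_set_conv_list[symmetric]) simp_all
  finally show ?thesis .
qed

lemma shuffle_mono_F_sup:
  assumes "finite K" "Poly_Mapping.keys \<alpha> \<subseteq> K"
  shows "shuffle_mono c \<alpha> = shfl.set.F (\<lambda>i. shuffle_pow (c i) (Poly_Mapping.lookup \<alpha> i)) K"
  unfolding shuffle_mono_F
  by (rule shfl.set.mono_neutral_left) (use assms in \<open>auto simp: in_keys_iff\<close>)

lemma pow_add: "shuffle_pow a (m + n) = shuffle (shuffle_pow a m) (shuffle_pow a n)"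
  by (induction m) (simp_all add: shuffle_assoc)

lemma shuffle_mono_add: "shuffle_mono c (\<alpha> + \<beta>) = shuffle (shuffle_mono c \<alpha>) (shuffle_mono c \<beta>)"
proof -
  let ?K = "Poly_Mapping.keys \<alpha> \<union> Poly_Mapping.keys \<beta>"
  have fK: "finite ?K" by simp
  have "shuffle_mono c (\<alpha> + \<beta>) = shfl.set.F (\<lambda>i. shuffle_pow (c i) (Poly_Mapping.lookup (\<alpha> + \<beta>) i)) ?K"
    by (rule shuffle_mono_F_sup[OF fK]) (rule keys_add)
  also have "\<dots> = shfl.set.F (\<lambda>i. shuffle (shuffle_pow (c i) (Poly_Mapping.lookup \<alpha> i)) (shuffle_pow (c i) (Poly_Mapping.lookup \<beta> i))) ?K"
    by (simp add: lookup_add pow_add)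
  also have "\<dots> = shuffle (shfl.set.F (\<lambda>i. shuffle_pow (c i) (Poly_Mapping.lookup \<alpha> i)) ?K) (shfl.set.F (\<lambda>i. shuffle_pow (c i) (Poly_Mapping.lookup \<beta> i)) ?K)"
    by (rule shfl.set.distrib)
  also have "\<dots> = shuffle (shuffle_mono c \<alpha>) (shuffle_mono c \<beta>)"
    by (simp add: shuffle_mono_F_sup[OF fK])
  finally show ?thesis .
qed

lemma shuffle_mono_zero[simp]: "shuffle_mono c 0 = one_ser"
  by (simp add: shuffle_mono_def)

lemma msc_F: "msc h (shfl.set.F f K) = shfl.set.F (\<lambda>i. msc h (f i)) K"
proof (cases "finite K")
  case True
  then show ?thesis by (induction K rule: finite_induct) (simp_all add: msc_shuffle)
qed simp

lemma msc_mono: "msc h (shuffle_mono c \<alpha>) = shuffle_mono (\<lambda>i. msc h (c i)) \<alpha>"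
  by (simp add: shuffle_mono_F msc_F msc_pow)

lemma ordge_F:
  assumes "finite K" "\<And>i. i \<in> K \<Longrightarrow> ordge (f i) (k i)"
  shows "ordge (shfl.set.F f K) (\<Sum>i\<in>K. k i)"
  using assms
proof (induction K rule: finite_induct)
  case empty then show ?case by simp
next
  case (insert x F)
  then show ?case by (simp add: ordge_shuffle)
qed

lemma mono_deg_sup: "finite K \<Longrightarrow> Poly_Mapping.keys \<alpha> \<subseteq> K \<Longrightarrow> mono_deg \<alpha> = (\<Sum>i\<in>K. Poly_Mapping.lookup \<alpha> i)"
  unfolding mono_deg_def by (rule sum.mono_neutral_left) (auto simp: in_keys_iff)

lemma keys_add_nat: "Poly_Mapping.keys (\<alpha>::mono) \<subseteq> Poly_Mapping.keys (\<alpha> + \<beta>)"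
  by (auto simp: in_keys_iff lookup_add)

lemma keys_add_nat2: "Poly_Mapping.keys (\<beta>::mono) \<subseteq> Poly_Mapping.keys (\<alpha> + \<beta>)"
  by (auto simp: in_keys_iff lookup_add)

lemma mono_deg_add: "mono_deg (\<alpha> + \<beta>) = mono_deg \<alpha> + mono_deg \<beta>"
proof -
  let ?K = "Poly_Mapping.keys \<alpha> \<union> Poly_Mapping.keys \<beta>"
  have "mono_deg (\<alpha> + \<beta>) = (\<Sum>i\<in>?K. Poly_Mapping.lookup (\<alpha> + \<beta>) i)"
    by (rule mono_deg_sup) (simp_all add: keys_add)
  also have "\<dots> = (\<Sum>i\<in>?K. Poly_Mapping.lookup \<alpha> i) + (\<Sum>i\<in>?K. Poly_Mapping.lookup \<beta> i)"
    by (simp add: lookup_add sum.distrib)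
  also have "\<dots> = mono_deg \<alpha> + mono_deg \<beta>"
    by (simp add: mono_deg_sup[symmetric])
  finally show ?thesis .
qed

lemma lookup_le_deg: "Poly_Mapping.lookup \<alpha> i \<le> mono_deg \<alpha>"
proof (cases "i \<in> Poly_Mapping.keys \<alpha>")
  case True
  then show ?thesis unfolding mono_deg_def by (intro member_le_sum) auto
next
  case False then show ?thesis by (simp add: in_keys_iff)
qed

lemma mono_deg_pos: "\<alpha> \<noteq> 0 \<Longrightarrow> 0 < mono_deg \<alpha>"
proof -
  assume "\<alpha> \<noteq> 0"
  then obtain i where "Poly_Mapping.lookup \<alpha> i \<noteq> 0" by (metis lookup_zero poly_mapping_eqI)
  then show ?thesis using lookup_le_deg[of \<alpha> i] by simp
qed

lemma mono_deg_zero[simp]: "mono_deg 0 = 0"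
  by (simp add: mono_deg_def)

lemma finite_deg_le: "finite K \<Longrightarrow> finite {\<alpha>::mono. Poly_Mapping.keys \<alpha> \<subseteq> K \<and> mono_deg \<alpha> \<le> N}"
proof -
  assume K: "finite K"
  let ?A = "{\<alpha>::mono. Poly_Mapping.keys \<alpha> \<subseteq> K \<and> mono_deg \<alpha> \<le> N}"
  have "Poly_Mapping.lookup ` ?A \<subseteq> {f. \<forall>x. (x \<in> K \<longrightarrow> f x \<in> {0..N}) \<and> (x \<notin> K \<longrightarrow> f x = 0)}"
  proof (clarsimp, intro conjI allI impI)
    fix \<alpha> :: mono and x assume a: "Poly_Mapping.keys \<alpha> \<subseteq> K" "mono_deg \<alpha> \<le> N"
    show "Poly_Mapping.lookup \<alpha> x \<le> N" using lookup_le_deg[of \<alpha> x] a by simp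
    assume "x \<notin> K" then show "Poly_Mapping.lookup \<alpha> x = 0" using a by (auto simp: in_keys_iff)
  qed
  then have "finite (Poly_Mapping.lookup ` ?A)"
    by (rule finite_subset) (rule finite_set_of_finite_funs[OF K], simp)
  then show ?thesis
    by (rule finite_imageD) (simp add: inj_on_def poly_mapping_eqI)
qed

lemma ordge_mono:
  assumes "\<forall>i\<in>{1..q}. c i [] = 0" "Poly_Mapping.keys \<alpha> \<subseteq> {1..q}"
  shows "ordge (shuffle_mono c \<alpha>) (mono_deg \<alpha>)"
  unfolding shuffle_mono_F mono_deg_def
proof (rule ordge_F)
  fix i assume "i \<in> Poly_Mapping.keys \<alpha>"
  then show "ordge (shuffle_pow (c i) (Poly_Mapping.lookup \<alpha> i)) (Poly_Mapping.lookup \<alpha> i)"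
    using assms by (intro ordge_pow) auto
qed simp



definition Aq :: "nat \<Rightarrow> nat \<Rightarrow> mono set" where
  "Aq q N = {\<alpha>. Poly_Mapping.keys \<alpha> \<subseteq> {1..q} \<and> mono_deg \<alpha> \<le> N}"

lemma finite_Aq: "finite (Aq q N)"
  unfolding Aq_def by (rule finite_deg_le) simp

definition W :: "nat \<Rightarrow> vser \<Rightarrow> cser \<Rightarrow> ser" where
  "W q c x w = (\<Sum>\<alpha>\<in>Aq q (length w). x \<alpha> * shuffle_mono c \<alpha> w)"

lemma wf_comp_W: "wf_comp q d c i = W q c (d i)"
  by (rule ext) (simp add: wf_comp_def W_def Aq_def)

definition proper :: "nat \<Rightarrow> vser \<Rightarrow> bool" where
  "proper q c = (\<forall>i\<in>{1..q}. c i [] = 0)"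

lemma mono_vanish:
  "proper q c \<Longrightarrow> Poly_Mapping.keys \<alpha> \<subseteq> {1..q} \<Longrightarrow> length w < mono_deg \<alpha> \<Longrightarrow> shuffle_mono c \<alpha> w = 0"
  using ordge_mono[of q c \<alpha>] by (auto simp: proper_def ordge_def)

lemma W_big:
  assumes "proper q c" "length w \<le> N"
  shows "W q c x w = (\<Sum>\<alpha>\<in>Aq q N. x \<alpha> * shuffle_mono c \<alpha> w)"
  unfolding W_def
proof (rule sum.mono_neutral_left)
  show "finite (Aq q N)" by (rule finite_Aq)
  show "Aq q (length w) \<subseteq> Aq q N" using assms(2) by (auto simp: Aq_def)
  show "\<forall>i\<in>Aq q N - Aq q (length w). x i * shuffle_mono c i w = 0"
  proof
    fix \<alpha> assume "\<alpha> \<in> Aq q N - Aq q (length w)"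
    then have "Poly_Mapping.keys \<alpha> \<subseteq> {1..q}" "length w < mono_deg \<alpha>" by (auto simp: Aq_def)
    then show "x \<alpha> * shuffle_mono c \<alpha> w = 0" using mono_vanish[OF assms(1)] by simp
  qed
qed

lemma W_cone: "W q c cone = one_ser"
proof (rule ext)
  fix w :: word
  have "W q c cone w = (\<Sum>\<alpha>\<in>Aq q (length w). if \<alpha> = 0 then shuffle_mono c \<alpha> w else 0)"
    unfolding W_def by (rule sum.cong) (auto simp: cone_def)
  also have "\<dots> = one_ser w"
    by (subst sum.delta[OF finite_Aq]) (simp add: Aq_def)
  finally show "W q c cone w = one_ser w" .
qed

lemma W_proper: "W q c x [] = x 0"
proof -
  have "Aq q 0 = {0}"
    by (auto simp: Aq_def) (metis mono_deg_pos not_less0)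
  then show ?thesis by (simp add: W_def one_ser_def shuffle_mono_def)
qed

lemma shuffle_sum1: "shuffle (\<lambda>v. \<Sum>j\<in>F. r j * f j v) b w = (\<Sum>j\<in>F. r j * shuffle (f j) b w)"
  by (subst shuffle_comm, subst shuffle_sum2) (simp add: shuffle_comm)

lemma pairs_eq:
  assumes "\<alpha> \<in> Aq q N"
  shows "{(\<beta>, \<gamma>). \<beta> + \<gamma> = \<alpha>} = {p \<in> Aq q N \<times> Aq q N. fst p + snd p = \<alpha>}"
proof -
  have "\<beta> \<in> Aq q N \<and> \<gamma> \<in> Aq q N" if "\<beta> + \<gamma> = \<alpha>" for \<beta> \<gamma>
    using assms that keys_add_nat[of \<beta> \<gamma>] keys_add_nat2[of \<gamma> \<beta>] mono_deg_add[of \<beta> \<gamma>]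
    by (auto simp: Aq_def)
  then show ?thesis by auto
qed

lemma W_cmul:
  assumes pc: "proper q c"
  shows "W q c (cmul a b) = shuffle (W q c a) (W q c b)"
proof (rule ext)
  fix w :: word
  let ?A = "Aq q (length w)"
  let ?G = "\<lambda>p. a (fst p) * b (snd p) * shuffle_mono c (fst p + snd p) w"
  have fA: "finite ?A" by (rule finite_Aq)
  have "W q c (cmul a b) w = (\<Sum>\<alpha>\<in>?A. (\<Sum>p\<in>{p \<in> ?A \<times> ?A. fst p + snd p = \<alpha>}. a (fst p) * b (snd p)) * shuffle_mono c \<alpha> w)"
    unfolding W_def cmul_def
    by (rule sum.cong[OF refl]) (simp add: pairs_eq case_prod_beta)
  also have "\<dots> = (\<Sum>\<alpha>\<in>?A. \<Sum>p\<in>?A \<times> ?A. if \<alpha> = fst p + snd p then ?G p else 0)"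
    by (rule sum.cong[OF refl]) (simp add: sum_distrib_right sum.inter_filter fA eq_commute, intro sum.cong refl, auto)
  also have "\<dots> = (\<Sum>p\<in>?A \<times> ?A. \<Sum>\<alpha>\<in>?A. if \<alpha> = fst p + snd p then ?G p else 0)"
    by (rule sum.swap)
  also have "\<dots> = (\<Sum>p\<in>?A \<times> ?A. if fst p + snd p \<in> ?A then ?G p else 0)"
    by (simp add: sum.delta[OF fA])
  also have "\<dots> = (\<Sum>p\<in>?A \<times> ?A. ?G p)"
  proof (rule sum.cong[OF refl])
    fix p assume p: "p \<in> ?A \<times> ?A"
    show "(if fst p + snd p \<in> ?A then ?G p else 0) = ?G p"
    proof (cases "fst p + snd p \<in> ?A")
      case False
      have k: "Poly_Mapping.keys (fst p + snd p) \<subseteq> {1..q}"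
        using p keys_add by (force simp: Aq_def)
      then have "length w < mono_deg (fst p + snd p)" using False by (auto simp: Aq_def)
      then show ?thesis using mono_vanish[OF pc k] by simp
    qed simp
  qed
  also have "\<dots> = (\<Sum>\<beta>\<in>?A. \<Sum>\<gamma>\<in>?A. a \<beta> * (b \<gamma> * shuffle (shuffle_mono c \<beta>) (shuffle_mono c \<gamma>) w))"
    by (simp add: sum.cartesian_product shuffle_mono_add mult.assoc case_prod_beta)
  also have "\<dots> = shuffle (\<lambda>v. \<Sum>\<beta>\<in>?A. a \<beta> * shuffle_mono c \<beta> v) (\<lambda>v. \<Sum>\<gamma>\<in>?A. b \<gamma> * shuffle_mono c \<gamma> v) w"
    by (simp add: shuffle_sum1 shuffle_sum2 sum_distrib_left)
  also have "\<dots> = shuffle (W q c a) (W q c b) w"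
    by (rule shuffle_cong; rule W_big[OF pc length_nths_le, symmetric])
  finally show "W q c (cmul a b) w = shuffle (W q c a) (W q c b) w" .
qed

lemma proper_msc: "proper q c \<Longrightarrow> proper q (\<lambda>i. msc h (c i))"
  by (simp add: proper_def)

lemma msc_W:
  assumes pc: "proper q c"
  shows "msc h (W q c x) = W q (\<lambda>i. msc h (c i)) x"
proof (rule ext)
  fix w :: word
  let ?A = "Aq q (length w)"
  have "msc h (W q c x) w = (\<Sum>\<eta>\<in>Ew w. (\<Sum>\<alpha>\<in>?A. x \<alpha> * shuffle_mono c \<alpha> \<eta>) * phi h \<eta> one_ser w)"
    unfolding msc_def by (rule sum.cong[OF refl]) (simp add: W_big[OF pc] Ew_def)
  also have "\<dots> = (\<Sum>\<alpha>\<in>?A. x \<alpha> * msc h (shuffle_mono c \<alpha>) w)"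
    by (simp add: msc_def sum_distrib_left sum_distrib_right sum.swap[of _ "Ew w"] mult.assoc)
  also have "\<dots> = W q (\<lambda>i. msc h (c i)) x w"
    by (simp add: W_def msc_mono)
  finally show "msc h (W q c x) w = W q (\<lambda>i. msc h (c i)) x w" .
qed



lemma finite_pairs: "finite {(\<beta>::mono, \<gamma>). \<beta> + \<gamma> = \<alpha>}"
proof -
  let ?B = "{\<beta>::mono. Poly_Mapping.keys \<beta> \<subseteq> Poly_Mapping.keys \<alpha> \<and> mono_deg \<beta> \<le> mono_deg \<alpha>}"
  have "{(\<beta>, \<gamma>). \<beta> + \<gamma> = \<alpha>} \<subseteq> ?B \<times> ?B"
    using keys_add_nat keys_add_nat2 mono_deg_add by fastforce
  moreover have "finite (?B \<times> ?B)" using finite_deg_le[of "Poly_Mapping.keys \<alpha>"] by simp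
  ultimately show ?thesis by (rule finite_subset)
qed

lemma add_eq_zero_mono: "(\<beta>::mono) + \<gamma> = 0 \<Longrightarrow> \<beta> = 0"
  by (metis add_is_0 lookup_add lookup_zero poly_mapping_eqI)

lemma cmul_split:
  "cmul x y \<alpha> = x 0 * y \<alpha> + (\<Sum>p\<in>{(\<beta>, \<gamma>). \<beta> + \<gamma> = \<alpha>} - {(0, \<alpha>)}. x (fst p) * y (snd p))"
proof -
  have "cmul x y \<alpha> = (\<Sum>p\<in>insert (0, \<alpha>) ({(\<beta>, \<gamma>). \<beta> + \<gamma> = \<alpha>} - {(0, \<alpha>)}). x (fst p) * y (snd p))"
    unfolding cmul_def by (rule sum.cong) (auto simp: case_prod_beta)
  also have "\<dots> = x 0 * y \<alpha> + (\<Sum>p\<in>{(\<beta>, \<gamma>). \<beta> + \<gamma> = \<alpha>} - {(0, \<alpha>)}. x (fst p) * y (snd p))"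
    by (subst sum.insert) (simp_all add: finite_pairs)
  finally show ?thesis .
qed

lemma cmul_at0: "cmul x y 0 = x 0 * y 0"
proof -
  have "{(\<beta>::mono, \<gamma>). \<beta> + \<gamma> = 0} - {(0, 0)} = {}"
    using add_eq_zero_mono[of _ "_::mono"] add.commute[of "_::mono"] by (auto, metis)
  then show ?thesis unfolding cmul_split by (simp only:) simp
qed

lemma cauchy_inv_ex1:
  assumes d0: "x 0 \<noteq> 0"
  shows "\<exists>!b. cmul x b = cone"
proof -
  define R where "R b \<alpha> = (\<Sum>p\<in>{(\<beta>, \<gamma>). \<beta> + \<gamma> = \<alpha>} - {(0, \<alpha>)}. x (fst p) * b (snd p))" for b \<alpha>
  define T where "T b \<alpha> = (cone \<alpha> - R b \<alpha>) / x 0" for b \<alpha>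
  have split: "cmul x b \<alpha> = x 0 * b \<alpha> + R b \<alpha>" for b \<alpha>
    unfolding R_def by (rule cmul_split)
  have eq: "cmul x b = cone \<longleftrightarrow> T b = b" for b
  proof
    assume h: "cmul x b = cone"
    show "T b = b"
    proof
      fix \<alpha>
      have "cone \<alpha> = x 0 * b \<alpha> + R b \<alpha>" using split[of b \<alpha>] h by simp
      then show "T b \<alpha> = b \<alpha>" using d0 by (simp add: T_def)
    qed
  next
    assume h: "T b = b"
    show "cmul x b = cone"
    proof
      fix \<alpha>
      have "b \<alpha> = (cone \<alpha> - R b \<alpha>) / x 0" using fun_cong[OF h, of \<alpha>] by (simp only: T_def)
      from aux_div[OF this d0] show "cmul x b \<alpha> = cone \<alpha>" by (simp only: split)
    qed
  qed
  have "\<exists>!b. T b = b"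
  proof (rule fixpoint_unique_exists[where \<mu> = mono_deg])
    fix f g :: cser and \<alpha> :: mono
    assume hyp: "\<And>y. mono_deg y < mono_deg \<alpha> \<Longrightarrow> f y = g y"
    have "R f \<alpha> = R g \<alpha>" unfolding R_def
    proof (rule sum.cong[OF refl])
      fix p assume p: "p \<in> {(\<beta>, \<gamma>). \<beta> + \<gamma> = \<alpha>} - {(0, \<alpha>)}"
      then have "fst p \<noteq> 0" by auto
      then have "mono_deg (snd p) < mono_deg \<alpha>"
        using p mono_deg_add[of "fst p" "snd p"] mono_deg_pos[of "fst p"] by auto
      then show "x (fst p) * f (snd p) = x (fst p) * g (snd p)" using hyp by simp
    qed
    then show "T f \<alpha> = T g \<alpha>" by (simp add: T_def)
  qed
  then show ?thesis using eq by simp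
qed

lemma cauchy_inv_prop: "d i 0 \<noteq> 0 \<Longrightarrow> cmul (d i) (cauchy_inv d i) = cone"
  using theI'[OF cauchy_inv_ex1[of "d i"]] unfolding cauchy_inv_def by blast

lemma phi_local:
  "(\<And>j v. length v < length w \<Longrightarrow> h j v = h' j v) \<Longrightarrow> phi h \<eta> one_ser w = phi h' \<eta> one_ser w"
proof (induction \<eta> arbitrary: w)
  case Nil then show ?case by simp
next
  case (Cons a \<eta>)
  show ?case
  proof (cases w)
    case Nil then show ?thesis by (simp add: letter_op_def)
  next
    case (Cons b w')
    have IH: "phi h \<eta> one_ser v = phi h' \<eta> one_ser v" if "length v \<le> length w'" for v
      by (rule Cons.IH) (use Cons.prems Cons that in auto)
    have sh: "shuffle (h a) (phi h \<eta> one_ser) w' = shuffle (h' a) (phi h' \<eta> one_ser) w'"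
    proof (rule shuffle_cong)
      fix S
      have l: "length (nths w' S) < length w" using length_nths_le[of w' S] Cons by simp
      show "h a (nths w' S) = h' a (nths w' S)" using Cons.prems[OF l] .
      show "phi h \<eta> one_ser (nths w' S) = phi h' \<eta> one_ser (nths w' S)"
        using IH length_nths_le by blast
    qed
    show ?thesis using Cons IH sh by (simp add: letter_op_def)
  qed
qed

lemma comp_inv_prop: "comp_inv g = mixed_comp (shuffle_inv g) (comp_inv g)"
proof -
  let ?G = "shuffle_inv g"
  define T where "T F = (\<lambda>(i, w). mixed_comp ?G (curry F) i w)" for F :: "nat \<times> word \<Rightarrow> real"
  have "\<exists>!F. T F = F"
  proof (rule fixpoint_unique_exists[where \<mu> = "\<lambda>p. length (snd p)"])
    fix F F' :: "nat \<times> word \<Rightarrow> real" and x :: "nat \<times> word"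
    assume hyp: "\<And>y. length (snd y) < length (snd x) \<Longrightarrow> F y = F' y"
    obtain i w where x: "x = (i, w)" by (cases x)
    have "phi (curry F) \<eta> one_ser w = phi (curry F') \<eta> one_ser w" for \<eta>
      by (rule phi_local) (use hyp x in auto)
    then show "T F x = T F' x" by (simp add: T_def x mixed_comp_msc msc_def)
  qed
  then obtain F where F: "T F = F" and uF: "\<And>F'. T F' = F' \<Longrightarrow> F' = F" by blast
  have ex: "curry F = mixed_comp ?G (curry F)"
  proof (intro ext)
    fix i w show "curry F i w = mixed_comp ?G (curry F) i w"
      using fun_cong[OF F, of "(i, w)"] by (simp add: T_def)
  qed
  have un: "h = curry F" if "h = mixed_comp ?G h" for h
  proof -
    have "T (case_prod h) = case_prod h"
    proof
      fix p show "T (case_prod h) p = case_prod h p"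
        using fun_cong[OF fun_cong[OF that]] by (cases p) (simp add: T_def)
    qed
    then have "case_prod h = F" by (rule uF)
    then show ?thesis by auto
  qed
  have "\<exists>!h. h = mixed_comp ?G h" using ex un by blast
  then show ?thesis unfolding comp_inv_def by (rule theI')
qed

lemma phi_cong_letters:
  "(\<And>a. a \<in> set \<eta> \<Longrightarrow> a \<noteq> 0 \<Longrightarrow> h a = h' a) \<Longrightarrow> phi h \<eta> s = phi h' \<eta> s"
  by (induction \<eta>) (auto simp: letter_op_def intro!: ext split: list.splits)



theorem theorem18:
  fixes m q :: nat and c :: vser and d :: vcser
  assumes c_alph: "\<forall>i\<in>{1..q}. \<forall>w. c i w \<noteq> 0 \<longrightarrow> set w \<subseteq> {0..m}"
    and c_proper: "\<forall>i\<in>{1..q}. c i [] = 0"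
    and d_alph: "\<forall>i\<in>{1..m}. \<forall>\<alpha>. d i \<alpha> \<noteq> 0 \<longrightarrow> Poly_Mapping.keys \<alpha> \<subseteq> {1..q}"
    and d_pure_improper: "\<forall>i\<in>{1..m}. d i 0 \<noteq> 0"
  shows "\<forall>i\<in>{1..q}. \<forall>w. set w \<subseteq> {0..m} \<longrightarrow>
           mult_static_fb q c d i w
             = mixed_comp c (wf_comp q d (mult_static_fb q c d)) i w"
proof -
  define G where "G = wf_comp q (cauchy_inv d) c"
  define h where "h = comp_inv G"
  define e where "e = mult_static_fb q c d"
  have pc: "proper q c" using c_proper by (simp add: proper_def)
  have e_eq: "e = (\<lambda>i. msc h (c i))"
    by (rule ext) (simp add: e_def mult_static_fb_def h_def G_def mixed_comp_msc)
  have pe: "proper q e" unfolding e_eq by (rule proper_msc[OF pc])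
  have hfix: "h = mixed_comp (shuffle_inv G) h" unfolding h_def by (rule comp_inv_prop)
  have hkey: "h a = wf_comp q d e a" if a: "a \<in> {1..m}" for a
  proof -
    let ?di = "cauchy_inv d a"
    have cinv: "cmul (d a) ?di = cone" using cauchy_inv_prop d_pure_improper a by blast
    have Ga: "G a = W q c ?di" by (simp add: G_def wf_comp_W)
    have "d a 0 * ?di 0 = 1" using fun_cong[OF cinv, of 0] by (simp add: cmul_at0 cone_def)
    then have "G a [] \<noteq> 0" by (auto simp: Ga W_proper)
    then have ginv: "shuffle (G a) (shuffle_inv G a) = one_ser" by (rule shuffle_inv_prop)
    have ha: "h a = msc h (shuffle_inv G a)"
      using fun_cong[OF hfix, of a] by (simp add: mixed_comp_msc)
    have X: "shuffle (W q e ?di) (h a) = one_ser"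
    proof -
      have "msc h (G a) = W q e ?di" by (simp add: Ga msc_W[OF pc] e_eq)
      then show ?thesis using ginv ha by (metis msc_shuffle msc_one)
    qed
    have Y: "shuffle (W q e (d a)) (W q e ?di) = one_ser"
      by (simp add: W_cmul[OF pe, symmetric] cinv W_cone)
    have "h a = shuffle (shuffle (W q e (d a)) (W q e ?di)) (h a)" by (simp add: Y)
    also have "\<dots> = W q e (d a)" by (simp add: shuffle_assoc X)
    finally show ?thesis by (simp add: wf_comp_W)
  qed
  show ?thesis
    unfolding e_def[symmetric]
  proof (intro ballI allI impI)
    fix i w assume i: "i \<in> {1..q}" and w: "set w \<subseteq> {0..m}"
    have "e i w = msc h (c i) w" by (simp add: e_eq)
    also have "\<dots> = msc (wf_comp q d e) (c i) w"
      unfolding msc_def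
    proof (rule sum.cong[OF refl])
      fix \<eta> assume "\<eta> \<in> Ew w"
      then have "set \<eta> \<subseteq> {0..m}" using w by (auto simp: Ew_def)
      then have "phi h \<eta> one_ser = phi (wf_comp q d e) \<eta> one_ser"
        by (intro phi_cong_letters hkey) auto
      then show "c i \<eta> * phi h \<eta> one_ser w = c i \<eta> * phi (wf_comp q d e) \<eta> one_ser w" by simp
    qed
    also have "\<dots> = mixed_comp c (wf_comp q d e) i w" by (simp add: mixed_comp_msc)
    finally show "e i w = mixed_comp c (wf_comp q d e) i w" .
  qed
qed

end
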